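(* Any timelike minimal surface in $\mathbb{L}^3$ without singularities is locally a graph of a function over the $x$-$z$ plane or over the $y$-$z$ plane, i.e. locally of the form $(x,\psi(x,z),z)$ or $(\psi(y,z),y,z)$, and the height function $\psi$ is a Born-Infeld soliton (in the variables $(x,z)$, respectively $(y,z)$).
   Context: $\mathbb{L}^3$ denotes $\mathbb{R}^3$ with the Lorentzian metric $ds^2=dx^2+dy^2-dz^2$. A surface is timelike if its induced metric is Lorentzian, and minimal if its mean curvature vanishes; "without singularities" means it is a regular immersion with nondegenerate (timelike) induced metric everywhere. A function $\psi$ on an open set of the $(u,v)$-plane is a Born-Infeld soliton (in the variables $u,v$) if $(1-\psi_v^2)\psi_{uu}+2\psi_u\psi_v\psi_{uv}-(1+\psi_u^2)\psi_{vv}=0$. *)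

theory Defs
  imports "HOL-Analysis.Analysis"
begin

definition pd1 :: "(real \<times> real \<Rightarrow> 'a::real_normed_vector) \<Rightarrow> real \<times> real \<Rightarrow> 'a" where
  "pd1 g = (\<lambda>p. frechet_derivative g (at p) (1, 0))"

definition pd2 :: "(real \<times> real \<Rightarrow> 'a::real_normed_vector) \<Rightarrow> real \<times> real \<Rightarrow> 'a" where
  "pd2 g = (\<lambda>p. frechet_derivative g (at p) (0, 1))"

fun Ck_on :: "nat \<Rightarrow> (real \<times> real) set \<Rightarrow> (real \<times> real \<Rightarrow> 'a::real_normed_vector) \<Rightarrow> bool" where
  "Ck_on 0 U g = continuous_on U g"
| "Ck_on (Suc k) U g = (g differentiable_on U \<and> Ck_on k U (pd1 g) \<and> Ck_on k U (pd2 g))"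

definition smooth_on :: "(real \<times> real) set \<Rightarrow> (real \<times> real \<Rightarrow> 'a::real_normed_vector) \<Rightarrow> bool" where
  "smooth_on U g = (\<forall>k. Ck_on k U g)"

definition lip :: "real \<times> real \<times> real \<Rightarrow> real \<times> real \<times> real \<Rightarrow> real" where
  "lip a b = fst a * fst b + fst (snd a) * fst (snd b) - snd (snd a) * snd (snd b)"

text \<open>Lorentzian cross product: lip (lcross a b) w = det(a,b,w); it is Lorentz-orthogonal to a, b.\<close>
definition lcross :: "real \<times> real \<times> real \<Rightarrow> real \<times> real \<times> real \<Rightarrow> real \<times> real \<times> real" where
  "lcross a b =
     (let (a1, a2, a3) = a; (b1, b2, b3) = b
      in (a2 * b3 - a3 * b2, a3 * b1 - a1 * b3, -(a1 * b2 - a2 * b1)))"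

definition fE where "fE f p = lip (pd1 f p) (pd1 f p)"
definition fF where "fF f p = lip (pd1 f p) (pd2 f p)"
definition fG where "fG f p = lip (pd2 f p) (pd2 f p)"

text \<open>Unit normal (for a timelike surface the normal is spacelike).\<close>
definition unit_normal :: "(real \<times> real \<Rightarrow> real \<times> real \<times> real) \<Rightarrow> real \<times> real \<Rightarrow> real \<times> real \<times> real" where
  "unit_normal f p = (let \<nu> = lcross (pd1 f p) (pd2 f p) in (1 / sqrt \<bar>lip \<nu> \<nu>\<bar>) *\<^sub>R \<nu>)"

definition sL where "sL f p = lip (pd1 (pd1 f) p) (unit_normal f p)"
definition sM where "sM f p = lip (pd2 (pd1 f) p) (unit_normal f p)"
definition sN where "sN f p = lip (pd2 (pd2 f) p) (unit_normal f p)"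

definition mean_curvature :: "(real \<times> real \<Rightarrow> real \<times> real \<times> real) \<Rightarrow> real \<times> real \<Rightarrow> real" where
  "mean_curvature f p =
     (fE f p * sN f p - 2 * fF f p * sM f p + fG f p * sL f p)
       / (2 * (fE f p * fG f p - (fF f p)\<^sup>2))"

definition regular_timelike_at :: "(real \<times> real \<Rightarrow> real \<times> real \<times> real) \<Rightarrow> real \<times> real \<Rightarrow> bool" where
  "regular_timelike_at f p =
     (f differentiable (at p) \<and> inj (frechet_derivative f (at p))
      \<and> fE f p * fG f p - (fF f p)\<^sup>2 < 0)"

definition born_infeld :: "(real \<times> real) set \<Rightarrow> (real \<times> real \<Rightarrow> real) \<Rightarrow> bool" where
  "born_infeld W \<psi> = (\<forall>q\<in>W.
     (1 - (pd2 \<psi> q)\<^sup>2) * pd1 (pd1 \<psi>) q + 2 * pd1 \<psi> q * pd2 \<psi> q * pd2 (pd1 \<psi>) q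
       - (1 + (pd1 \<psi> q)\<^sup>2) * pd2 (pd2 \<psi>) q = 0)"

end

theory Submission
  imports Defs
begin


definition HD :: "(real \<times> real \<Rightarrow> 'a::real_normed_vector) \<Rightarrow> 'a \<Rightarrow> 'a \<Rightarrow> real \<times> real \<Rightarrow> bool" where
  "HD g A B p \<longleftrightarrow> (g has_derivative (\<lambda>h. fst h *\<^sub>R A + snd h *\<^sub>R B)) (at p)"

lemma HD_pd:
  assumes "HD g A B p" shows "pd1 g p = A" "pd2 g p = B"
  using frechet_derivative_at[OF assms[unfolded HD_def]]
  by (auto simp: pd1_def pd2_def dest: fun_cong[where x="(1,0)"] fun_cong[where x="(0,1)"])

lemma HD_differentiable: "HD g A B p \<Longrightarrow> g differentiable (at p)"
  unfolding HD_def differentiable_def by blast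

lemma HD_diff:
  assumes "g differentiable (at p)" shows "HD g (pd1 g p) (pd2 g p) p"
proof -
  let ?D = "frechet_derivative g (at p)"
  have d: "(g has_derivative ?D) (at p)" using assms frechet_derivative_works by blast
  interpret L: bounded_linear ?D using has_derivative_bounded_linear[OF d] .
  have "?D h = fst h *\<^sub>R pd1 g p + snd h *\<^sub>R pd2 g p" for h
  proof -
    have "h = fst h *\<^sub>R (1,0) + snd h *\<^sub>R (0,1)" by (cases h) simp
    then have "?D h = ?D (fst h *\<^sub>R (1,0) + snd h *\<^sub>R (0,1))" by simp
    also have "\<dots> = fst h *\<^sub>R ?D (1,0) + snd h *\<^sub>R ?D (0,1)"
      by (simp only: L.add L.scale)
    finally show ?thesis unfolding pd1_def pd2_def .
  qed
  then have "?D = (\<lambda>h. fst h *\<^sub>R pd1 g p + snd h *\<^sub>R pd2 g p)"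
    by (intro ext)
  with d show ?thesis by (simp add: HD_def)
qed

lemma HD_add:
  "HD g A B p \<Longrightarrow> HD k C D p \<Longrightarrow> HD (\<lambda>s. g s + k s) (A + C) (B + D) p"
  unfolding HD_def
  by (rule has_derivative_eq_rhs, rule has_derivative_add, assumption+)
     (auto simp: algebra_simps scaleR_add_right)

lemma HD_const: "HD (\<lambda>s. c) 0 0 p"
  unfolding HD_def by (rule has_derivative_eq_rhs, rule has_derivative_const) auto

lemma HD_ident: "HD (\<lambda>s. s) (1,0) (0,1) p"
  unfolding HD_def by (rule has_derivative_eq_rhs, rule has_derivative_ident) auto

lemma HD_scaleR:
  assumes "HD a a1 a2 p" "HD v V1 V2 p"
  shows "HD (\<lambda>s. a s *\<^sub>R v s) (a1 *\<^sub>R v p + a p *\<^sub>R V1) (a2 *\<^sub>R v p + a p *\<^sub>R V2) p"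
  using assms unfolding HD_def
  by (rule has_derivative_eq_rhs[OF has_derivative_scaleR])
     (auto simp: algebra_simps scaleR_add_right)

lemma HD_mult:
  assumes "HD (a::real\<times>real\<Rightarrow>real) a1 a2 p" "HD v V1 V2 p"
  shows "HD (\<lambda>s. a s * v s) (a1 * v p + a p * V1) (a2 * v p + a p * V2) p"
  using HD_scaleR[OF assms] by simp

lemma HD_linear:
  assumes "bounded_linear L" "HD g A B p"
  shows "HD (\<lambda>s. L (g s)) (L A) (L B) p"
  using assms unfolding HD_def
  by (rule has_derivative_eq_rhs[OF bounded_linear.has_derivative])
     (auto simp: bounded_linear.linear[OF assms(1)] linear_add linear_scale)

lemma HD_pair:
  assumes "HD a A1 B1 p" "HD b A2 B2 p"
  shows "HD (\<lambda>s. (a s, b s)) (A1, A2) (B1, B2) p"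
  using assms unfolding HD_def
  by (rule has_derivative_eq_rhs[OF has_derivative_Pair]) auto

lemma HD_comp:
  assumes "HD G A B p" "HD \<phi> P Q (G p)"
  shows "HD (\<lambda>s. \<phi> (G s)) (fst A *\<^sub>R P + snd A *\<^sub>R Q) (fst B *\<^sub>R P + snd B *\<^sub>R Q) p"
  using assms unfolding HD_def
  by (rule has_derivative_eq_rhs[OF has_derivative_compose[where g=\<phi>]])
     (auto simp: algebra_simps scaleR_add_right)

lemma HD_inverse:
  assumes "HD a A B p" "a p \<noteq> (0::real)"
  shows "HD (\<lambda>s. inverse (a s)) (- (A * inverse (a p) * inverse (a p)))
              (- (B * inverse (a p) * inverse (a p))) p"
proof -
  have "((\<lambda>s. inverse (a s)) has_derivative (\<lambda>h. - (inverse (a p) * (fst h *\<^sub>R A + snd h *\<^sub>R B) * inverse (a p)))) (at p)"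
    using Deriv.has_derivative_inverse[OF assms(2) assms(1)[unfolded HD_def]] .
  then show ?thesis unfolding HD_def
    by (rule has_derivative_eq_rhs) (auto simp: algebra_simps)
qed

lemma fd_cong:
  assumes "open U" "p \<in> U" "\<And>x. x \<in> U \<Longrightarrow> g x = k x"
  shows "frechet_derivative g (at p) = frechet_derivative k (at p)"
proof -
  have "(g has_derivative D) (at p) \<longleftrightarrow> (k has_derivative D) (at p)" for D
    using has_derivative_transform_within_open[of g D p UNIV U k]
      has_derivative_transform_within_open[of k D p UNIV U g] assms by auto
  then have "(\<lambda>D. (g has_derivative D) (at p)) = (\<lambda>D. (k has_derivative D) (at p))"
    by blast
  then show ?thesis unfolding frechet_derivative_def by simp
qed

lemma pd_cong:
  assumes "open U" "p \<in> U" "\<And>x. x \<in> U \<Longrightarrow> g x = k x"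
  shows "pd1 g p = pd1 k p" "pd2 g p = pd2 k p"
  using fd_cong[OF assms] by (auto simp: pd1_def pd2_def)

lemma diff_cong:
  assumes "open U" "p \<in> U" "\<And>x. x \<in> U \<Longrightarrow> g x = k x" "g differentiable (at p)"
  shows "k differentiable (at p)"
  using assms(4) has_derivative_transform_within_open[of g _ p UNIV U k] assms(1-3)
  unfolding differentiable_def by blast

lemma Ck_cong:
  assumes "open U" "Ck_on n U g" "\<And>x. x \<in> U \<Longrightarrow> g x = k x"
  shows "Ck_on n U k"
  using assms
proof (induction n arbitrary: g k)
  case 0 then show ?case using continuous_on_cong[of U U g k] by simp
next
  case (Suc n)
  have d: "\<forall>x\<in>U. g differentiable (at x)"
    using Suc.prems by (simp add: differentiable_on_eq_differentiable_at)
  have "\<forall>x\<in>U. k differentiable (at x)"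
    using d Suc.prems(1,3) diff_cong[of U _ g k] by blast
  then have "k differentiable_on U"
    using Suc.prems(1) by (simp add: differentiable_on_eq_differentiable_at)
  moreover have "Ck_on n U (pd1 k)"
    using Suc.IH[of "pd1 g" "pd1 k"] Suc.prems pd_cong[of U _ g k] by simp
  moreover have "Ck_on n U (pd2 k)"
    using Suc.IH[of "pd2 g" "pd2 k"] Suc.prems pd_cong[of U _ g k] by simp
  ultimately show ?case by simp
qed

lemma Ck_mono: "Ck_on (Suc n) U g \<Longrightarrow> Ck_on n U g"
proof (induction n arbitrary: g)
  case 0 then show ?case by (auto intro: differentiable_imp_continuous_on)
next
  case (Suc n)
  have "g differentiable_on U" "Ck_on (Suc n) U (pd1 g)" "Ck_on (Suc n) U (pd2 g)"
    using Suc.prems by simp_all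
  then show ?case using Suc.IH[of "pd1 g"] Suc.IH[of "pd2 g"] by simp
qed

lemma Ck_diff: "open U \<Longrightarrow> Ck_on (Suc n) U g \<Longrightarrow> x \<in> U \<Longrightarrow> HD g (pd1 g x) (pd2 g x) x"
  by (auto simp: differentiable_on_eq_differentiable_at intro!: HD_diff)

lemma Ck_cont: "Ck_on n U g \<Longrightarrow> continuous_on U g"
  by (cases n) (simp_all add: differentiable_imp_continuous_on)


lemma Ck_SucI:
  assumes "open U" "\<And>x. x \<in> U \<Longrightarrow> HD g (Pa x) (Pb x) x" "Ck_on n U Pa" "Ck_on n U Pb"
  shows "Ck_on (Suc n) U g"
proof -
  have "\<forall>x\<in>U. g differentiable (at x)" using assms(2) HD_differentiable by blast
  then have "g differentiable_on U"
    using assms(1) by (simp add: differentiable_on_eq_differentiable_at)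
  moreover have "Ck_on n U (pd1 g)"
    using Ck_cong[OF assms(1,3)] HD_pd(1)[OF assms(2)] by metis
  moreover have "Ck_on n U (pd2 g)"
    using Ck_cong[OF assms(1,4)] HD_pd(2)[OF assms(2)] by metis
  ultimately show ?thesis by simp
qed

lemma Ck_const: "open U \<Longrightarrow> Ck_on n U (\<lambda>s. c)"
proof (induction n arbitrary: c)
  case 0 then show ?case by simp
next
  case (Suc n) then show ?case
    by (intro Ck_SucI[where Pa="\<lambda>_. 0" and Pb="\<lambda>_. 0"] HD_const) auto
qed

lemma Ck_ident: "open U \<Longrightarrow> Ck_on n U (\<lambda>s. s)"
proof (cases n)
  case 0 then show ?thesis by (simp add: continuous_on_id)
next
  case (Suc m) assume "open U" then show ?thesis unfolding Suc
    by (intro Ck_SucI[where Pa="\<lambda>_. (1,0)" and Pb="\<lambda>_. (0,1)"] HD_ident Ck_const) auto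
qed

lemma Ck_linear:
  assumes "open U" "bounded_linear L"
  shows "Ck_on n U g \<Longrightarrow> Ck_on n U (\<lambda>s. L (g s))"
proof (induction n arbitrary: g)
  case 0 then show ?case using bounded_linear.continuous_on[OF assms(2)] by simp
next
  case (Suc n)
  show ?case
  proof (rule Ck_SucI[where Pa="\<lambda>x. L (pd1 g x)" and Pb="\<lambda>x. L (pd2 g x)"])
    show "open U" by fact
    show "HD (\<lambda>s. L (g s)) (L (pd1 g x)) (L (pd2 g x)) x" if "x \<in> U" for x
      using HD_linear[OF assms(2) Ck_diff[OF assms(1) Suc.prems that]] .
    show "Ck_on n U (\<lambda>x. L (pd1 g x))" using Suc.IH Suc.prems by simp
    show "Ck_on n U (\<lambda>x. L (pd2 g x))" using Suc.IH Suc.prems by simp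
  qed
qed

lemma Ck_add:
  assumes "open U"
  shows "Ck_on n U g \<Longrightarrow> Ck_on n U k \<Longrightarrow> Ck_on n U (\<lambda>s. g s + k s)"
proof (induction n arbitrary: g k)
  case 0 then show ?case by (simp add: continuous_on_add)
next
  case (Suc n)
  show ?case
  proof (rule Ck_SucI[where Pa="\<lambda>x. pd1 g x + pd1 k x" and Pb="\<lambda>x. pd2 g x + pd2 k x"])
    show "open U" by fact
    show "HD (\<lambda>s. g s + k s) (pd1 g x + pd1 k x) (pd2 g x + pd2 k x) x" if "x \<in> U" for x
      using HD_add[OF Ck_diff[OF assms(1) Suc.prems(1) that] Ck_diff[OF assms(1) Suc.prems(2) that]] .
    show "Ck_on n U (\<lambda>x. pd1 g x + pd1 k x)" using Suc.IH Suc.prems by simp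
    show "Ck_on n U (\<lambda>x. pd2 g x + pd2 k x)" using Suc.IH Suc.prems by simp
  qed
qed

lemma Ck_scaleR:
  assumes "open U"
  shows "Ck_on n U a \<Longrightarrow> Ck_on n U v \<Longrightarrow> Ck_on n U (\<lambda>s. a s *\<^sub>R v s)"
proof (induction n arbitrary: a v)
  case 0 then show ?case by (simp add: continuous_on_scaleR)
next
  case (Suc n)
  show ?case
  proof (rule Ck_SucI[where Pa="\<lambda>x. pd1 a x *\<^sub>R v x + a x *\<^sub>R pd1 v x"
                          and Pb="\<lambda>x. pd2 a x *\<^sub>R v x + a x *\<^sub>R pd2 v x"])
    show "open U" by fact
    show "HD (\<lambda>s. a s *\<^sub>R v s) (pd1 a x *\<^sub>R v x + a x *\<^sub>R pd1 v x) (pd2 a x *\<^sub>R v x + a x *\<^sub>R pd2 v x) x"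
      if "x \<in> U" for x
      using HD_scaleR[OF Ck_diff[OF assms(1) Suc.prems(1) that] Ck_diff[OF assms(1) Suc.prems(2) that]] .
    have a: "Ck_on n U a" "Ck_on n U v" using Suc.prems Ck_mono by blast+
    show "Ck_on n U (\<lambda>x. pd1 a x *\<^sub>R v x + a x *\<^sub>R pd1 v x)"
      using Suc.IH Suc.prems a by (intro Ck_add[OF assms]) simp_all
    show "Ck_on n U (\<lambda>x. pd2 a x *\<^sub>R v x + a x *\<^sub>R pd2 v x)"
      using Suc.IH Suc.prems a by (intro Ck_add[OF assms]) simp_all
  qed
qed

lemma Ck_mult:
  assumes "open U" "Ck_on n U (a::real\<times>real\<Rightarrow>real)" "Ck_on n U v"
  shows "Ck_on n U (\<lambda>s. a s * v s)"
  using Ck_scaleR[OF assms] by simp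

lemma Ck_minus:
  assumes "open U" "Ck_on n U (a::real\<times>real\<Rightarrow>real)"
  shows "Ck_on n U (\<lambda>s. - a s)"
  using Ck_linear[OF assms(1) bounded_linear_minus[OF bounded_linear_ident] assms(2)] by simp

lemma Ck_pair:
  assumes "open U"
  shows "Ck_on n U a \<Longrightarrow> Ck_on n U b \<Longrightarrow> Ck_on n U (\<lambda>s. (a s, b s))"
proof (induction n arbitrary: a b)
  case 0 then show ?case by (simp add: continuous_on_Pair)
next
  case (Suc n)
  show ?case
  proof (rule Ck_SucI[where Pa="\<lambda>x. (pd1 a x, pd1 b x)" and Pb="\<lambda>x. (pd2 a x, pd2 b x)"])
    show "open U" by fact
    show "HD (\<lambda>s. (a s, b s)) (pd1 a x, pd1 b x) (pd2 a x, pd2 b x) x" if "x \<in> U" for x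
      using HD_pair[OF Ck_diff[OF assms(1) Suc.prems(1) that] Ck_diff[OF assms(1) Suc.prems(2) that]] .
    show "Ck_on n U (\<lambda>x. (pd1 a x, pd1 b x))" using Suc.IH Suc.prems by simp
    show "Ck_on n U (\<lambda>x. (pd2 a x, pd2 b x))" using Suc.IH Suc.prems by simp
  qed
qed

lemma Ck_inverse:
  assumes "open U"
  shows "Ck_on n U a \<Longrightarrow> (\<forall>x\<in>U. a x \<noteq> (0::real)) \<Longrightarrow> Ck_on n U (\<lambda>s. inverse (a s))"
proof (induction n arbitrary: a)
  case 0 then show ?case by (simp add: continuous_on_inverse)
next
  case (Suc n)
  have a: "Ck_on n U a" using Suc.prems Ck_mono by blast
  have ia: "Ck_on n U (\<lambda>s. inverse (a s))" using Suc.IH[OF a] Suc.prems by simp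
  show ?case
  proof (rule Ck_SucI[where Pa="\<lambda>x. - (pd1 a x * inverse (a x) * inverse (a x))"
                          and Pb="\<lambda>x. - (pd2 a x * inverse (a x) * inverse (a x))"])
    show "open U" by fact
    show "HD (\<lambda>s. inverse (a s)) (- (pd1 a x * inverse (a x) * inverse (a x)))
            (- (pd2 a x * inverse (a x) * inverse (a x))) x" if "x \<in> U" for x
      using HD_inverse[OF Ck_diff[OF assms(1) Suc.prems(1) that]] Suc.prems(2) that by blast
    show "Ck_on n U (\<lambda>x. - (pd1 a x * inverse (a x) * inverse (a x)))"
      using Suc.prems ia by (intro Ck_minus[OF assms] Ck_mult[OF assms]) simp_all
    show "Ck_on n U (\<lambda>x. - (pd2 a x * inverse (a x) * inverse (a x)))"
      using Suc.prems ia by (intro Ck_minus[OF assms] Ck_mult[OF assms]) simp_all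
  qed
qed

lemma Ck_comp:
  assumes "open U" "open V"
  shows "Ck_on n V \<phi> \<Longrightarrow> Ck_on n U G \<Longrightarrow> G ` U \<subseteq> V \<Longrightarrow> Ck_on n U (\<lambda>s. \<phi> (G s))"
proof (induction n arbitrary: \<phi> G)
  case 0 then show ?case using continuous_on_compose2[of V \<phi> U G] by simp
next
  case (Suc n)
  have G: "Ck_on n U G" using Suc.prems Ck_mono by blast
  have c1: "Ck_on n U (\<lambda>s. pd1 \<phi> (G s))" "Ck_on n U (\<lambda>s. pd2 \<phi> (G s))"
    using Suc.IH[OF _ G] Suc.prems by simp_all
  have lf: "bounded_linear (fst :: real\<times>real \<Rightarrow> real)" "bounded_linear (snd :: real\<times>real \<Rightarrow> real)"
    by (simp_all add: bounded_linear_fst bounded_linear_snd)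
  have c2: "Ck_on n U (\<lambda>s. fst (pd1 G s))" "Ck_on n U (\<lambda>s. snd (pd1 G s))"
           "Ck_on n U (\<lambda>s. fst (pd2 G s))" "Ck_on n U (\<lambda>s. snd (pd2 G s))"
    using Suc.prems(2) by (auto intro: Ck_linear[OF assms(1) lf(1)] Ck_linear[OF assms(1) lf(2)])
  show ?case
  proof (rule Ck_SucI[where Pa="\<lambda>x. fst (pd1 G x) *\<^sub>R pd1 \<phi> (G x) + snd (pd1 G x) *\<^sub>R pd2 \<phi> (G x)"
                          and Pb="\<lambda>x. fst (pd2 G x) *\<^sub>R pd1 \<phi> (G x) + snd (pd2 G x) *\<^sub>R pd2 \<phi> (G x)"])
    show "open U" by fact
    show "HD (\<lambda>s. \<phi> (G s)) (fst (pd1 G x) *\<^sub>R pd1 \<phi> (G x) + snd (pd1 G x) *\<^sub>R pd2 \<phi> (G x))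
       (fst (pd2 G x) *\<^sub>R pd1 \<phi> (G x) + snd (pd2 G x) *\<^sub>R pd2 \<phi> (G x)) x" if "x \<in> U" for x
    proof -
      have "G x \<in> V" using Suc.prems(3) that by blast
      then show ?thesis
        using HD_comp[OF Ck_diff[OF assms(1) Suc.prems(2) that] Ck_diff[OF assms(2) Suc.prems(1)]] by blast
    qed
    show "Ck_on n U (\<lambda>x. fst (pd1 G x) *\<^sub>R pd1 \<phi> (G x) + snd (pd1 G x) *\<^sub>R pd2 \<phi> (G x))"
      using c1 c2 by (intro Ck_add[OF assms(1)] Ck_scaleR[OF assms(1)])
    show "Ck_on n U (\<lambda>x. fst (pd2 G x) *\<^sub>R pd1 \<phi> (G x) + snd (pd2 G x) *\<^sub>R pd2 \<phi> (G x))"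
      using c1 c2 by (intro Ck_add[OF assms(1)] Ck_scaleR[OF assms(1)])
  qed
qed


lemma line1:
  fixes \<phi> :: "real \<times> real \<Rightarrow> real"
  assumes "\<phi> differentiable (at (s,c))"
  shows "((\<lambda>t. \<phi> (t,c)) has_real_derivative pd1 \<phi> (s,c)) (at s)"
proof -
  have h: "((\<lambda>t::real. (t,c)) has_derivative (\<lambda>h. (h,0))) (at s)"
    by (rule has_derivative_eq_rhs, rule has_derivative_Pair[OF has_derivative_ident has_derivative_const]) auto
  have "((\<lambda>t. \<phi> (t,c)) has_derivative (\<lambda>h. fst (h,0::real) *\<^sub>R pd1 \<phi> (s,c) + snd (h,0::real) *\<^sub>R pd2 \<phi> (s,c))) (at s)"
    using has_derivative_compose[OF h HD_diff[OF assms, unfolded HD_def]] by simp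
  then show ?thesis unfolding has_field_derivative_def
    by (rule has_derivative_eq_rhs) (auto simp: mult.commute)
qed

lemma line2:
  fixes \<phi> :: "real \<times> real \<Rightarrow> real"
  assumes "\<phi> differentiable (at (c,s))"
  shows "((\<lambda>t. \<phi> (c,t)) has_real_derivative pd2 \<phi> (c,s)) (at s)"
proof -
  have h: "((\<lambda>t::real. (c,t)) has_derivative (\<lambda>h. (0,h))) (at s)"
    by (rule has_derivative_eq_rhs, rule has_derivative_Pair[OF has_derivative_const has_derivative_ident]) auto
  have "((\<lambda>t. \<phi> (c,t)) has_derivative (\<lambda>h. fst (0::real,h) *\<^sub>R pd1 \<phi> (c,s) + snd (0::real,h) *\<^sub>R pd2 \<phi> (c,s))) (at s)"
    using has_derivative_compose[OF h HD_diff[OF assms, unfolded HD_def]] by simp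
  then show ?thesis unfolding has_field_derivative_def
    by (rule has_derivative_eq_rhs) (auto simp: mult.commute)
qed

lemma schwarz:
  fixes \<phi> :: "real \<times> real \<Rightarrow> real"
  assumes U: "open U" and C: "Ck_on (Suc (Suc 0)) U \<phi>" and qU: "q \<in> U"
  shows "pd1 (pd2 \<phi>) q = pd2 (pd1 \<phi>) q"
proof (rule ccontr)
  assume ne: "pd1 (pd2 \<phi>) q \<noteq> pd2 (pd1 \<phi>) q"
  define D12 where "D12 = pd2 (pd1 \<phi>)"
  define D21 where "D21 = pd1 (pd2 \<phi>)"
  have d0: "\<forall>z\<in>U. \<phi> differentiable (at z)" "\<forall>z\<in>U. pd1 \<phi> differentiable (at z)"
       "\<forall>z\<in>U. pd2 \<phi> differentiable (at z)"
    using C U by (simp_all add: differentiable_on_eq_differentiable_at)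
  have c12: "continuous_on U D12" and c21: "continuous_on U D21"
    using C unfolding D12_def D21_def by simp_all
  define e where "e = \<bar>D12 q - D21 q\<bar> / 2"
  have e: "e > 0" using ne by (simp add: e_def D12_def D21_def)
  obtain d1 where d1: "d1 > 0" "\<forall>z\<in>U. dist z q < d1 \<longrightarrow> dist (D12 z) (D12 q) < e"
    using c12 qU e unfolding continuous_on_iff by blast
  obtain d2 where d2: "d2 > 0" "\<forall>z\<in>U. dist z q < d2 \<longrightarrow> dist (D21 z) (D21 q) < e"
    using c21 qU e unfolding continuous_on_iff by blast
  obtain d0 where d0b: "d0 > 0" "ball q d0 \<subseteq> U"
    using U qU open_contains_ball by blast
  obtain x y where q: "q = (x,y)" by (cases q)
  define t where "t = min d0 (min d1 d2) / 3"
  have t: "t > 0" using d1 d2 d0b by (simp add: t_def)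
  have box: "(x + a, y + b) \<in> U \<and> \<bar>D12 (x+a,y+b) - D12 q\<bar> < e \<and> \<bar>D21 (x+a,y+b) - D21 q\<bar> < e"
    if "0 \<le> a" "a \<le> t" "0 \<le> b" "b \<le> t" for a b
  proof -
    have "dist (x + a, y + b) q = norm (a, b)" by (simp add: q dist_norm)
    also have "\<dots> \<le> norm a + norm b" by (rule norm_Pair_le)
    also have "\<dots> \<le> 2 * t" using that by simp
    also have "\<dots> < min d0 (min d1 d2)" using t unfolding t_def by linarith
    finally have dd: "dist (x + a, y + b) q < min d0 (min d1 d2)" .
    then have inU: "(x + a, y + b) \<in> U" using d0b by (auto simp: dist_commute)
    show ?thesis using inU dd d1 d2 by (auto simp: dist_real_def)
  qed
  have boxU: "(u, v) \<in> U" if "x \<le> u" "u \<le> x + t" "y \<le> v" "v \<le> y + t" for u v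
    using box[of "u - x" "v - y"] that by simp
  define \<Delta> where "\<Delta> = \<phi> (x+t,y+t) - \<phi> (x+t,y) - \<phi> (x,y+t) + \<phi> (x,y)"
  obtain \<xi> where \<xi>: "x < \<xi>" "\<xi> < x + t"
    "(\<phi> (x+t,y+t) - \<phi> (x+t,y)) - (\<phi> (x,y+t) - \<phi> (x,y)) = t * (pd1 \<phi> (\<xi>,y+t) - pd1 \<phi> (\<xi>,y))"
  proof -
    have "\<exists>z. x < z \<and> z < x + t \<and> (\<lambda>s. \<phi> (s,y+t) - \<phi> (s,y)) (x+t) - (\<lambda>s. \<phi> (s,y+t) - \<phi> (s,y)) x
          = (x + t - x) * (pd1 \<phi> (z,y+t) - pd1 \<phi> (z,y))"
    proof (rule MVT2)
      show "x < x + t" using t by simp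
      fix s assume "x \<le> s" "s \<le> x + t"
      then have "(s, y+t) \<in> U" "(s,y) \<in> U" using boxU t by auto
      then show "((\<lambda>s. \<phi> (s,y+t) - \<phi> (s,y)) has_real_derivative (pd1 \<phi> (s,y+t) - pd1 \<phi> (s,y))) (at s)"
        using d0 by (intro DERIV_diff line1) auto
    qed
    then show ?thesis using that by auto
  qed
  obtain \<eta> where \<eta>: "y < \<eta>" "\<eta> < y + t" "pd1 \<phi> (\<xi>,y+t) - pd1 \<phi> (\<xi>,y) = t * D12 (\<xi>,\<eta>)"
  proof -
    have "\<exists>z. y < z \<and> z < y + t \<and> pd1 \<phi> (\<xi>,y+t) - pd1 \<phi> (\<xi>,y) = (y + t - y) * D12 (\<xi>,z)"
    proof (rule MVT2)
      show "y < y + t" using t by simp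
      fix r assume "y \<le> r" "r \<le> y + t"
      then have "(\<xi>, r) \<in> U" using boxU \<xi> by auto
      then show "((\<lambda>r. pd1 \<phi> (\<xi>,r)) has_real_derivative D12 (\<xi>,r)) (at r)"
        using d0 unfolding D12_def by (intro line2) auto
    qed
    then show ?thesis using that by auto
  qed
  obtain \<eta>' where \<eta>': "y < \<eta>'" "\<eta>' < y + t"
    "(\<phi> (x+t,y+t) - \<phi> (x,y+t)) - (\<phi> (x+t,y) - \<phi> (x,y)) = t * (pd2 \<phi> (x+t,\<eta>') - pd2 \<phi> (x,\<eta>'))"
  proof -
    have "\<exists>z. y < z \<and> z < y + t \<and> (\<lambda>r. \<phi> (x+t,r) - \<phi> (x,r)) (y+t) - (\<lambda>r. \<phi> (x+t,r) - \<phi> (x,r)) y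
          = (y + t - y) * (pd2 \<phi> (x+t,z) - pd2 \<phi> (x,z))"
    proof (rule MVT2)
      show "y < y + t" using t by simp
      fix r assume "y \<le> r" "r \<le> y + t"
      then have "(x+t, r) \<in> U" "(x,r) \<in> U" using boxU t by auto
      then show "((\<lambda>r. \<phi> (x+t,r) - \<phi> (x,r)) has_real_derivative (pd2 \<phi> (x+t,r) - pd2 \<phi> (x,r))) (at r)"
        using d0 by (intro DERIV_diff line2) auto
    qed
    then show ?thesis using that by auto
  qed
  obtain \<xi>' where \<xi>': "x < \<xi>'" "\<xi>' < x + t" "pd2 \<phi> (x+t,\<eta>') - pd2 \<phi> (x,\<eta>') = t * D21 (\<xi>',\<eta>')"
  proof -
    have "\<exists>z. x < z \<and> z < x + t \<and> pd2 \<phi> (x+t,\<eta>') - pd2 \<phi> (x,\<eta>') = (x + t - x) * D21 (z,\<eta>')"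
    proof (rule MVT2)
      show "x < x + t" using t by simp
      fix s assume "x \<le> s" "s \<le> x + t"
      then have "(s, \<eta>') \<in> U" using boxU \<eta>' by auto
      then show "((\<lambda>s. pd2 \<phi> (s,\<eta>')) has_real_derivative D21 (s,\<eta>')) (at s)"
        using d0 unfolding D21_def by (intro line1) auto
    qed
    then show ?thesis using that by auto
  qed
  have "t * (t * D12 (\<xi>,\<eta>)) = t * (t * D21 (\<xi>',\<eta>'))"
    using \<xi>(3) \<eta>(3) \<eta>'(3) \<xi>'(3) by (simp add: algebra_simps)
  then have eq: "D12 (\<xi>,\<eta>) = D21 (\<xi>',\<eta>')" using t by simp
  have b1: "\<bar>D12 (\<xi>,\<eta>) - D12 q\<bar> < e"
    using box[of "\<xi> - x" "\<eta> - y"] \<xi> \<eta> by simp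
  have b2: "\<bar>D21 (\<xi>',\<eta>') - D21 q\<bar> < e"
    using box[of "\<xi>' - x" "\<eta>' - y"] \<xi>' \<eta>' by simp
  have "\<bar>D12 q - D21 q\<bar> < 2 * e" using b1 b2 eq by linarith
  then show False unfolding e_def by simp
qed


lemma lip_add1: "lip (a + b) c = lip a c + lip b c"
  by (simp add: lip_def algebra_simps)
lemma lip_add2: "lip a (b + c) = lip a b + lip a c"
  by (simp add: lip_def algebra_simps)
lemma lip_scale1: "lip (x *\<^sub>R a) c = x * lip a c"
  by (simp add: lip_def algebra_simps)
lemma lip_scale2: "lip a (x *\<^sub>R c) = x * lip a c"
  by (simp add: lip_def algebra_simps)
lemma lip_comm: "lip a b = lip b a"
  by (simp add: lip_def algebra_simps)

lemma lcross_eq: "lcross a b =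
  (fst (snd a) * snd (snd b) - snd (snd a) * fst (snd b),
   snd (snd a) * fst b - fst a * snd (snd b),
   -(fst a * fst (snd b) - fst (snd a) * fst b))"
  by (simp add: lcross_def split: prod.splits)

lemma lip_lcross1: "lip (lcross a b) a = 0"
  by (simp add: lcross_eq lip_def algebra_simps)
lemma lip_lcross2: "lip (lcross a b) b = 0"
  by (simp add: lcross_eq lip_def algebra_simps)

lemma lcross_comb: "lcross (A1 *\<^sub>R f1 + A2 *\<^sub>R f2) (B1 *\<^sub>R f1 + B2 *\<^sub>R f2) = (A1*B2 - A2*B1) *\<^sub>R lcross f1 f2"
  by (simp add: lcross_eq algebra_simps)

lemma lip_lcross_self: "lip (lcross a b) (lcross a b) = - (lip a a * lip b b - (lip a b)\<^sup>2)"
  by (simp add: lcross_eq lip_def power2_eq_square algebra_simps)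

definition num :: "(real\<times>real\<times>real) \<Rightarrow> (real\<times>real\<times>real) \<Rightarrow> (real\<times>real\<times>real) \<Rightarrow> (real\<times>real\<times>real) \<Rightarrow> (real\<times>real\<times>real) \<Rightarrow> real" where
  "num a b u v w = lip a a * lip (lcross a b) w - 2 * lip a b * lip (lcross a b) v + lip b b * lip (lcross a b) u"

lemma num_scalar:
  fixes A1 A2 B1 B2 E F G L M N J :: real
  assumes "J = A1*B2 - A2*B1"
  shows "(A1*A1*E + 2*A1*A2*F + A2*A2*G) * (J * (B1*B1*L + 2*B1*B2*M + B2*B2*N))
    - 2 * (A1*B1*E + (A1*B2 + A2*B1)*F + A2*B2*G) * (J * (A1*B1*L + (A1*B2+A2*B1)*M + A2*B2*N))
    + (B1*B1*E + 2*B1*B2*F + B2*B2*G) * (J*(A1*A1*L + 2*A1*A2*M + A2*A2*N))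
   = J^3 * (E*N - 2*F*M + G*L)"
  unfolding assms by algebra

lemma num_transform:
  fixes f1 f2 f11 f12 f22 :: "real\<times>real\<times>real"
  shows "num (A1 *\<^sub>R f1 + A2 *\<^sub>R f2) (B1 *\<^sub>R f1 + B2 *\<^sub>R f2)
     (c1 *\<^sub>R f1 + c2 *\<^sub>R f2 + (A1*A1) *\<^sub>R f11 + (2*A1*A2) *\<^sub>R f12 + (A2*A2) *\<^sub>R f22)
     (d1 *\<^sub>R f1 + d2 *\<^sub>R f2 + (A1*B1) *\<^sub>R f11 + (A1*B2 + A2*B1) *\<^sub>R f12 + (A2*B2) *\<^sub>R f22)
     (e1 *\<^sub>R f1 + e2 *\<^sub>R f2 + (B1*B1) *\<^sub>R f11 + (2*B1*B2) *\<^sub>R f12 + (B2*B2) *\<^sub>R f22)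
   = (A1*B2 - A2*B1)^3 * num f1 f2 f11 f12 f22"
proof -
  define J where "J = A1*B2 - A2*B1"
  define n where "n = lcross f1 f2"
  have c: "lcross (A1 *\<^sub>R f1 + A2 *\<^sub>R f2) (B1 *\<^sub>R f1 + B2 *\<^sub>R f2) = J *\<^sub>R n"
    unfolding J_def n_def by (rule lcross_comb)
  have z: "lip n f1 = 0" "lip n f2 = 0" unfolding n_def by (simp_all add: lip_lcross1 lip_lcross2)
  have s: "lip f2 f1 = lip f1 f2" by (rule lip_comm)
  note ls = lip_add1 lip_add2 lip_scale1 lip_scale2
  have e1: "lip (A1 *\<^sub>R f1 + A2 *\<^sub>R f2) (A1 *\<^sub>R f1 + A2 *\<^sub>R f2) = A1*A1*lip f1 f1 + 2*A1*A2*lip f1 f2 + A2*A2*lip f2 f2"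
    by (simp add: ls s algebra_simps)
  have e2: "lip (A1 *\<^sub>R f1 + A2 *\<^sub>R f2) (B1 *\<^sub>R f1 + B2 *\<^sub>R f2) = A1*B1*lip f1 f1 + (A1*B2 + A2*B1)*lip f1 f2 + A2*B2*lip f2 f2"
    by (simp add: ls s algebra_simps)
  have e3: "lip (B1 *\<^sub>R f1 + B2 *\<^sub>R f2) (B1 *\<^sub>R f1 + B2 *\<^sub>R f2) = B1*B1*lip f1 f1 + 2*B1*B2*lip f1 f2 + B2*B2*lip f2 f2"
    by (simp add: ls s algebra_simps)
  have s1: "lip (J *\<^sub>R n) (c1 *\<^sub>R f1 + c2 *\<^sub>R f2 + (A1*A1) *\<^sub>R f11 + (2*A1*A2) *\<^sub>R f12 + (A2*A2) *\<^sub>R f22)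
      = J * (A1*A1*lip n f11 + 2*A1*A2*lip n f12 + A2*A2*lip n f22)"
    by (simp add: ls z algebra_simps)
  have s2: "lip (J *\<^sub>R n) (d1 *\<^sub>R f1 + d2 *\<^sub>R f2 + (A1*B1) *\<^sub>R f11 + (A1*B2 + A2*B1) *\<^sub>R f12 + (A2*B2) *\<^sub>R f22)
      = J * (A1*B1*lip n f11 + (A1*B2+A2*B1)*lip n f12 + A2*B2*lip n f22)"
    by (simp add: ls z algebra_simps)
  have s3: "lip (J *\<^sub>R n) (e1 *\<^sub>R f1 + e2 *\<^sub>R f2 + (B1*B1) *\<^sub>R f11 + (2*B1*B2) *\<^sub>R f12 + (B2*B2) *\<^sub>R f22)
      = J * (B1*B1*lip n f11 + 2*B1*B2*lip n f12 + B2*B2*lip n f22)"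
    by (simp add: ls z algebra_simps)
  show ?thesis
    unfolding num_def c e1 e2 e3 s1 s2 s3 J_def[symmetric] n_def[symmetric]
    by (rule num_scalar[OF J_def])
qed


lemma Ck_subset:
  assumes "open V" "V \<subseteq> U"
  shows "Ck_on k U g \<Longrightarrow> Ck_on k V g"
proof (induction k arbitrary: g)
  case 0 then show ?case using continuous_on_subset assms(2) by auto
next
  case (Suc k) then show ?case using differentiable_on_subset assms(2) by auto
qed

lemma pd_lin:
  assumes "bounded_linear L" "g differentiable (at x)"
  shows "pd1 (\<lambda>s. L (g s)) x = L (pd1 g x)" "pd2 (\<lambda>s. L (g s)) x = L (pd2 g x)"
  using HD_pd[OF HD_linear[OF assms(1) HD_diff[OF assms(2)]]] by simp_all

lemma schwarz_lin:
  fixes f :: "real\<times>real \<Rightarrow> 'a::real_normed_vector" and L :: "'a \<Rightarrow> real"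
  assumes U: "open U" and C: "Ck_on (Suc (Suc 0)) U f" and q: "q \<in> U" and L: "bounded_linear L"
  shows "L (pd1 (pd2 f) q) = L (pd2 (pd1 f) q)"
proof -
  have C': "Ck_on (Suc (Suc 0)) U (\<lambda>s. L (f s))" by (rule Ck_linear[OF U L C])
  have d: "\<forall>x\<in>U. f differentiable (at x)" "\<forall>x\<in>U. pd1 f differentiable (at x)"
       "\<forall>x\<in>U. pd2 f differentiable (at x)"
    using C U by (simp_all add: differentiable_on_eq_differentiable_at)
  have e1: "pd1 (pd2 (\<lambda>s. L (f s))) q = pd1 (\<lambda>s. L (pd2 f s)) q"
    by (rule pd_cong(1)[OF U q]) (use pd_lin[OF L] d in auto)
  have e2: "pd2 (pd1 (\<lambda>s. L (f s))) q = pd2 (\<lambda>s. L (pd1 f s)) q"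
    by (rule pd_cong(2)[OF U q]) (use pd_lin[OF L] d in auto)
  have "pd1 (pd2 (\<lambda>s. L (f s))) q = pd2 (pd1 (\<lambda>s. L (f s))) q"
    by (rule schwarz[OF U C' q])
  then show ?thesis unfolding e1 e2 using pd_lin[OF L] d q by auto
qed

lemma schwarz3:
  fixes f :: "real\<times>real \<Rightarrow> real\<times>real\<times>real"
  assumes U: "open U" and C: "Ck_on (Suc (Suc 0)) U f" and q: "q \<in> U"
  shows "pd1 (pd2 f) q = pd2 (pd1 f) q"
proof -
  have l1: "bounded_linear (\<lambda>x::real\<times>real\<times>real. fst x)" by (rule bounded_linear_fst)
  have l2: "bounded_linear (\<lambda>x::real\<times>real\<times>real. fst (snd x))"
    using bounded_linear_compose[OF bounded_linear_fst bounded_linear_snd] by (simp add: o_def)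
  have l3: "bounded_linear (\<lambda>x::real\<times>real\<times>real. snd (snd x))"
    using bounded_linear_compose[OF bounded_linear_snd bounded_linear_snd] by (simp add: o_def)
  show ?thesis
    using schwarz_lin[OF U C q l1] schwarz_lin[OF U C q l2] schwarz_lin[OF U C q l3]
    by (simp add: prod_eq_iff)
qed

lemma core:
  fixes f :: "real\<times>real \<Rightarrow> real\<times>real\<times>real" and G :: "real\<times>real \<Rightarrow> real\<times>real"
  assumes U: "open U" and W: "open W" and fC: "Ck_on (Suc (Suc 0)) U f"
    and GC: "Ck_on (Suc (Suc 0)) W G" and GW: "G ` W \<subseteq> U" and s: "s \<in> W"
  shows "num (pd1 (\<lambda>x. f (G x)) s) (pd2 (\<lambda>x. f (G x)) s) (pd1 (pd1 (\<lambda>x. f (G x))) s)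
              (pd2 (pd1 (\<lambda>x. f (G x))) s) (pd2 (pd2 (\<lambda>x. f (G x))) s)
       = (fst (pd1 G s) * snd (pd2 G s) - snd (pd1 G s) * fst (pd2 G s))^3
         * num (pd1 f (G s)) (pd2 f (G s)) (pd1 (pd1 f) (G s)) (pd2 (pd1 f) (G s)) (pd2 (pd2 f) (G s))"
proof -
  define F where "F = (\<lambda>x. f (G x))"
  define q where "q = G s"
  have qU: "q \<in> U" using GW s q_def by blast
  define a1 where "a1 = (\<lambda>x. fst (pd1 G x))"
  define a2 where "a2 = (\<lambda>x. snd (pd1 G x))"
  define b1 where "b1 = (\<lambda>x. fst (pd2 G x))"
  define b2 where "b2 = (\<lambda>x. snd (pd2 G x))"
  have lf: "bounded_linear (fst :: real\<times>real \<Rightarrow> real)" "bounded_linear (snd :: real\<times>real \<Rightarrow> real)"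
    by (simp_all add: bounded_linear_fst bounded_linear_snd)
  have GC1: "Ck_on (Suc 0) W (pd1 G)" "Ck_on (Suc 0) W (pd2 G)" using GC by simp_all
  have aC: "Ck_on (Suc 0) W a1" "Ck_on (Suc 0) W a2" "Ck_on (Suc 0) W b1" "Ck_on (Suc 0) W b2"
    unfolding a1_def a2_def b1_def b2_def
    using Ck_linear[OF W lf(1) GC1(1)] Ck_linear[OF W lf(2) GC1(1)]
      Ck_linear[OF W lf(1) GC1(2)] Ck_linear[OF W lf(2) GC1(2)] by auto
  have fC1: "Ck_on (Suc 0) U (pd1 f)" "Ck_on (Suc 0) U (pd2 f)" using fC by simp_all
  have GC': "Ck_on (Suc 0) W G" using GC Ck_mono by blast
  have fC': "Ck_on (Suc 0) U f" using fC Ck_mono by blast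
  have P: "pd1 F x = a1 x *\<^sub>R pd1 f (G x) + a2 x *\<^sub>R pd2 f (G x)"
          "pd2 F x = b1 x *\<^sub>R pd1 f (G x) + b2 x *\<^sub>R pd2 f (G x)" if "x \<in> W" for x
  proof -
    have "G x \<in> U" using GW that by blast
    from HD_pd[OF HD_comp[OF Ck_diff[OF W GC' that] Ck_diff[OF U fC' this]]]
    show "pd1 F x = a1 x *\<^sub>R pd1 f (G x) + a2 x *\<^sub>R pd2 f (G x)"
         "pd2 F x = b1 x *\<^sub>R pd1 f (G x) + b2 x *\<^sub>R pd2 f (G x)"
      unfolding F_def a1_def a2_def b1_def b2_def by simp_all
  qed
  have HG: "HD G (pd1 G s) (pd2 G s) s" by (rule Ck_diff[OF W GC' s])
  have H1: "HD (\<lambda>x. pd1 f (G x)) (fst (pd1 G s) *\<^sub>R pd1 (pd1 f) q + snd (pd1 G s) *\<^sub>R pd2 (pd1 f) q)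
                               (fst (pd2 G s) *\<^sub>R pd1 (pd1 f) q + snd (pd2 G s) *\<^sub>R pd2 (pd1 f) q) s"
    using HD_comp[OF HG Ck_diff[OF U fC1(1) qU[unfolded q_def]]] unfolding q_def .
  have H2: "HD (\<lambda>x. pd2 f (G x)) (fst (pd1 G s) *\<^sub>R pd1 (pd2 f) q + snd (pd1 G s) *\<^sub>R pd2 (pd2 f) q)
                               (fst (pd2 G s) *\<^sub>R pd1 (pd2 f) q + snd (pd2 G s) *\<^sub>R pd2 (pd2 f) q) s"
    using HD_comp[OF HG Ck_diff[OF U fC1(2) qU[unfolded q_def]]] unfolding q_def .
  have Ha: "HD a1 (pd1 a1 s) (pd2 a1 s) s" "HD a2 (pd1 a2 s) (pd2 a2 s) s"
           "HD b1 (pd1 b1 s) (pd2 b1 s) s" "HD b2 (pd1 b2 s) (pd2 b2 s) s"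
    using Ck_diff[OF W aC(1) s] Ck_diff[OF W aC(2) s] Ck_diff[OF W aC(3) s] Ck_diff[OF W aC(4) s] by auto
  note HP1 = HD_add[OF HD_scaleR[OF Ha(1) H1] HD_scaleR[OF Ha(2) H2]]
  note HP2 = HD_add[OF HD_scaleR[OF Ha(3) H1] HD_scaleR[OF Ha(4) H2]]
  have c1: "pd1 (pd1 F) s = pd1 (\<lambda>x. a1 x *\<^sub>R pd1 f (G x) + a2 x *\<^sub>R pd2 f (G x)) s"
           "pd2 (pd1 F) s = pd2 (\<lambda>x. a1 x *\<^sub>R pd1 f (G x) + a2 x *\<^sub>R pd2 f (G x)) s"
    by (rule pd_cong[OF W s], simp add: P)+
  have c2: "pd2 (pd2 F) s = pd2 (\<lambda>x. b1 x *\<^sub>R pd1 f (G x) + b2 x *\<^sub>R pd2 f (G x)) s"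
    by (rule pd_cong[OF W s], simp add: P)
  have sch: "pd1 (pd2 f) q = pd2 (pd1 f) q" by (rule schwarz3[OF U fC qU])
  have v11: "pd1 (pd1 F) s = pd1 a1 s *\<^sub>R pd1 f q + pd1 a2 s *\<^sub>R pd2 f q + (a1 s * a1 s) *\<^sub>R pd1 (pd1 f) q
        + (2 * a1 s * a2 s) *\<^sub>R pd2 (pd1 f) q + (a2 s * a2 s) *\<^sub>R pd2 (pd2 f) q"
    using c1(1) HD_pd(1)[OF HP1] sch unfolding q_def
    by (simp add: a1_def a2_def prod_eq_iff algebra_simps)
  have v12: "pd2 (pd1 F) s = pd2 a1 s *\<^sub>R pd1 f q + pd2 a2 s *\<^sub>R pd2 f q + (a1 s * b1 s) *\<^sub>R pd1 (pd1 f) q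
        + (a1 s * b2 s + a2 s * b1 s) *\<^sub>R pd2 (pd1 f) q + (a2 s * b2 s) *\<^sub>R pd2 (pd2 f) q"
    using c1(2) HD_pd(2)[OF HP1] sch unfolding q_def
    by (simp add: a1_def a2_def b1_def b2_def prod_eq_iff algebra_simps)
  have v22: "pd2 (pd2 F) s = pd2 b1 s *\<^sub>R pd1 f q + pd2 b2 s *\<^sub>R pd2 f q + (b1 s * b1 s) *\<^sub>R pd1 (pd1 f) q
        + (2 * b1 s * b2 s) *\<^sub>R pd2 (pd1 f) q + (b2 s * b2 s) *\<^sub>R pd2 (pd2 f) q"
    using c2 HD_pd(2)[OF HP2] sch unfolding q_def
    by (simp add: b1_def b2_def prod_eq_iff algebra_simps)
  have "num (pd1 F s) (pd2 F s) (pd1 (pd1 F) s) (pd2 (pd1 F) s) (pd2 (pd2 F) s)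
      = (a1 s * b2 s - a2 s * b1 s)^3 * num (pd1 f q) (pd2 f q) (pd1 (pd1 f) q) (pd2 (pd1 f) q) (pd2 (pd2 f) q)"
    unfolding v11 v12 v22 P[OF s] q_def[symmetric] by (rule num_transform)
  then show ?thesis unfolding F_def q_def a1_def a2_def b1_def b2_def .
qed


lemma Ck_sub:
  assumes "open U" "Ck_on n U (a::real\<times>real\<Rightarrow>real)" "Ck_on n U b"
  shows "Ck_on n U (\<lambda>s. a s - b s)"
  using Ck_add[OF assms(1) assms(2) Ck_minus[OF assms(1,3)]] by simp

lemma bl2: "bounded_linear (\<lambda>v::real\<times>real. fst v *\<^sub>R A + snd v *\<^sub>R (B::'a::real_normed_vector))"
  by (intro bounded_linear_add bounded_linear_compose[OF bounded_linear_scaleR_left bounded_linear_fst]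
            bounded_linear_compose[OF bounded_linear_scaleR_left bounded_linear_snd])

lemma solve2:
  fixes a b :: real and H1 H2 :: "real\<times>real"
  assumes "a *\<^sub>R H1 + b *\<^sub>R H2 = (u1, u2)" "fst H1 * snd H2 - fst H2 * snd H1 \<noteq> 0"
  shows "a = (snd H2 * u1 - fst H2 * u2) * inverse (fst H1 * snd H2 - fst H2 * snd H1)"
        "b = (fst H1 * u2 - snd H1 * u1) * inverse (fst H1 * snd H2 - fst H2 * snd H1)"
proof -
  obtain \<alpha> \<beta> where H1: "H1 = (\<alpha>, \<beta>)" by (cases H1)
  obtain \<gamma> \<delta> where H2: "H2 = (\<gamma>, \<delta>)" by (cases H2)
  have e: "a * \<alpha> + b * \<gamma> = u1" "a * \<beta> + b * \<delta> = u2" using assms(1) by (simp_all add: H1 H2)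
  have n: "\<alpha> * \<delta> - \<gamma> * \<beta> \<noteq> 0" using assms(2) by (simp add: H1 H2)
  have "a * (\<alpha> * \<delta> - \<gamma> * \<beta>) = \<delta> * u1 - \<gamma> * u2" using e by (simp add: algebra_simps flip: e)
  then show "a = (snd H2 * u1 - fst H2 * u2) * inverse (fst H1 * snd H2 - fst H2 * snd H1)"
    using n by (simp add: H1 H2 field_simps)
  have "b * (\<alpha> * \<delta> - \<gamma> * \<beta>) = \<alpha> * u2 - \<beta> * u1" using e by (simp add: algebra_simps flip: e)
  then show "b = (fst H1 * u2 - snd H1 * u1) * inverse (fst H1 * snd H2 - fst H2 * snd H1)"
    using n by (simp add: H1 H2 field_simps)
qed

lemma local_inverse:
  fixes h :: "real\<times>real \<Rightarrow> real\<times>real"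
  assumes U: "open U" and hS: "\<forall>k. Ck_on k U h" and pU: "p \<in> U"
    and J: "fst (pd1 h p) * snd (pd2 h p) - fst (pd2 h p) * snd (pd1 h p) \<noteq> 0"
  shows "\<exists>V W G. open V \<and> p \<in> V \<and> V \<subseteq> U \<and> open W \<and> (\<forall>q\<in>V. h q \<in> W \<and> G (h q) = q)
           \<and> (\<forall>s\<in>W. G s \<in> V \<and> h (G s) = s) \<and> (\<forall>k. Ck_on k W G)"
proof -
  define h1 where "h1 = pd1 h"
  define h2 where "h2 = pd2 h"
  define Jf where "Jf = (\<lambda>q. fst (h1 q) * snd (h2 q) - fst (h2 q) * snd (h1 q))"
  have lf: "bounded_linear (fst :: real\<times>real \<Rightarrow> real)" "bounded_linear (snd :: real\<times>real \<Rightarrow> real)"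
    by (simp_all add: bounded_linear_fst bounded_linear_snd)
  have h1S: "Ck_on k U h1" "Ck_on k U h2" for k
    using hS[rule_format, of "Suc k"] by (simp_all add: h1_def h2_def)
  have cS: "Ck_on k U (\<lambda>q. fst (h1 q))" "Ck_on k U (\<lambda>q. snd (h1 q))"
           "Ck_on k U (\<lambda>q. fst (h2 q))" "Ck_on k U (\<lambda>q. snd (h2 q))" for k
    using Ck_linear[OF U lf(1) h1S(1)] Ck_linear[OF U lf(2) h1S(1)]
          Ck_linear[OF U lf(1) h1S(2)] Ck_linear[OF U lf(2) h1S(2)] by auto
  have JS: "Ck_on k U Jf" for k
    unfolding Jf_def by (intro Ck_sub[OF U] Ck_mult[OF U] cS)
  define U0 where "U0 = Jf -` (- {0}) \<inter> U"
  have U0: "open U0" unfolding U0_def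
    using continuous_on_open_vimage[OF U, of Jf] Ck_cont[OF JS] by auto
  have pU0: "p \<in> U0" using J pU by (simp add: U0_def Jf_def h1_def h2_def)
  have U0U: "U0 \<subseteq> U" by (auto simp: U0_def)
  define f' where "f' = (\<lambda>x. Blinfun (\<lambda>v::real\<times>real. fst v *\<^sub>R h1 x + snd v *\<^sub>R h2 x))"
  have f'a: "blinfun_apply (f' x) = (\<lambda>v. fst v *\<^sub>R h1 x + snd v *\<^sub>R h2 x)" for x
    unfolding f'_def by (rule bounded_linear_Blinfun_apply[OF bl2])
  have derf: "(h has_derivative blinfun_apply (f' x)) (at x)" if "x \<in> U0" for x
  proof -
    have "x \<in> U" using that U0U by blast
    from Ck_diff[OF U hS[rule_format, of "Suc 0"] this] show ?thesis
      unfolding f'a HD_def h1_def h2_def .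
  qed
  have ch: "continuous_on U0 h1" "continuous_on U0 h2"
    using Ck_cont[OF h1S(1)] Ck_cont[OF h1S(2)] continuous_on_subset U0U by blast+
  have contf: "continuous_on U0 f'"
    by (rule continuous_on_blinfun_componentwise) (auto simp: f'a intro!: continuous_intros ch)
  define \<alpha> where "\<alpha> = fst (h1 p)"
  define \<beta> where "\<beta> = snd (h1 p)"
  define \<gamma> where "\<gamma> = fst (h2 p)"
  define \<delta> where "\<delta> = snd (h2 p)"
  define J0 where "J0 = \<alpha> * \<delta> - \<gamma> * \<beta>"
  have J0: "J0 \<noteq> 0" using J by (simp add: J0_def \<alpha>_def \<beta>_def \<gamma>_def \<delta>_def h1_def h2_def algebra_simps)
  define invf where "invf = Blinfun (\<lambda>w::real\<times>real. ((\<delta> * fst w - \<gamma> * snd w) / J0, (\<alpha> * snd w - \<beta> * fst w) / J0))"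
  have bli: "bounded_linear (\<lambda>w::real\<times>real. ((\<delta> * fst w - \<gamma> * snd w) / J0, (\<alpha> * snd w - \<beta> * fst w) / J0))"
    by (rule linear_conv_bounded_linear[THEN iffD1])
       (auto intro!: linearI simp: algebra_simps add_divide_distrib diff_divide_distrib)
  have invf: "invf o\<^sub>L f' p = id_blinfun"
  proof (rule blinfun_eqI)
    fix i :: "real\<times>real"
    show "blinfun_apply (invf o\<^sub>L f' p) i = blinfun_apply id_blinfun i"
      using J0 unfolding invf_def bounded_linear_Blinfun_apply[OF bli] blinfun_apply_blinfun_compose f'a
      by (simp add: \<alpha>_def[symmetric] \<beta>_def[symmetric] \<gamma>_def[symmetric] \<delta>_def[symmetric] J0_def prod_eq_iff field_simps)
  qed
  obtain U' V G g' where U': "open U'" "U' \<subseteq> U0" "p \<in> U'" and V: "open V" "h p \<in> V"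
    and hom: "homeomorphism U' V h G" and Gd: "\<And>y. y \<in> V \<Longrightarrow> (G has_derivative (g' y)) (at y)"
    using inverse_function_theorem[OF U0 derf contf pU0 invf] by metis
  have hom': "\<forall>x\<in>U'. G (h x) = x" "h ` U' = V" "\<forall>y\<in>V. h (G y) = y" "G ` V = U'" "continuous_on V G"
    using hom unfolding homeomorphism_def by auto
  have U'U: "U' \<subseteq> U" using U' U0U by blast
  define \<Phi>1 where "\<Phi>1 = (\<lambda>q. (snd (h2 q) * inverse (Jf q), - (snd (h1 q) * inverse (Jf q))))"
  define \<Phi>2 where "\<Phi>2 = (\<lambda>q. (- (fst (h2 q) * inverse (Jf q)), fst (h1 q) * inverse (Jf q)))"
  have JnU': "\<forall>x\<in>U'. Jf x \<noteq> 0" using U' by (auto simp: U0_def)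
  have iJ: "Ck_on k U' (\<lambda>q. inverse (Jf q))" for k
    using Ck_inverse[OF U'(1) Ck_subset[OF U'(1) U'U JS] JnU'] .
  have cS': "Ck_on k U' (\<lambda>q. fst (h1 q))" "Ck_on k U' (\<lambda>q. snd (h1 q))"
           "Ck_on k U' (\<lambda>q. fst (h2 q))" "Ck_on k U' (\<lambda>q. snd (h2 q))" for k
    using Ck_subset[OF U'(1) U'U cS(1)] Ck_subset[OF U'(1) U'U cS(2)]
      Ck_subset[OF U'(1) U'U cS(3)] Ck_subset[OF U'(1) U'U cS(4)] by auto
  have \<Phi>S: "Ck_on k U' \<Phi>1" "Ck_on k U' \<Phi>2" for k
    unfolding \<Phi>1_def \<Phi>2_def
    by (intro Ck_pair[OF U'(1)] Ck_minus[OF U'(1)] Ck_mult[OF U'(1)] cS' iJ)+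
  have HG: "HD G (\<Phi>1 (G s)) (\<Phi>2 (G s)) s" if s: "s \<in> V" for s
  proof -
    have Gdiff: "G differentiable (at s)" using Gd[OF s] unfolding differentiable_def by blast
    note HG0 = HD_diff[OF Gdiff]
    have q: "G s \<in> U'" using hom'(4) s by blast
    then have qU: "G s \<in> U" using U'U by blast
    have Jq: "Jf (G s) \<noteq> 0" using JnU' q by blast
    note Hc = HD_comp[OF HG0 Ck_diff[OF U hS[rule_format, of "Suc 0"] qU]]
    have e1: "pd1 (\<lambda>x. h (G x)) s = pd1 (\<lambda>x. x) s" "pd2 (\<lambda>x. h (G x)) s = pd2 (\<lambda>x. x) s"
      using pd_cong[OF V(1) s, of "\<lambda>x. h (G x)" "\<lambda>x. x"] hom'(3) by auto
    have i1: "pd1 (\<lambda>x. x) s = (1::real, 0::real)" "pd2 (\<lambda>x. x) s = (0::real, 1::real)"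
      using HD_pd[OF HD_ident] by auto
    have A: "fst (pd1 G s) *\<^sub>R h1 (G s) + snd (pd1 G s) *\<^sub>R h2 (G s) = (1, 0)"
      using HD_pd(1)[OF Hc] e1(1) i1(1) by (simp add: h1_def h2_def)
    have B: "fst (pd2 G s) *\<^sub>R h1 (G s) + snd (pd2 G s) *\<^sub>R h2 (G s) = (0, 1)"
      using HD_pd(2)[OF Hc] e1(2) i1(2) by (simp add: h1_def h2_def)
    have Jq': "fst (h1 (G s)) * snd (h2 (G s)) - fst (h2 (G s)) * snd (h1 (G s)) \<noteq> 0"
      using Jq by (simp add: Jf_def)
    have "pd1 G s = \<Phi>1 (G s)"
      using solve2[OF A Jq'] by (simp add: \<Phi>1_def Jf_def prod_eq_iff)
    moreover have "pd2 G s = \<Phi>2 (G s)"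
      using solve2[OF B Jq'] by (simp add: \<Phi>2_def Jf_def prod_eq_iff)
    ultimately show ?thesis using HG0 by simp
  qed
  have GV: "G ` V \<subseteq> U'" using hom'(4) by blast
  have GS: "Ck_on k V G" for k
  proof (induction k)
    case 0 then show ?case using hom'(5) by simp
  next
    case (Suc k)
    show ?case
      by (rule Ck_SucI[OF V(1) HG]) (auto intro: Ck_comp[OF V(1) U'(1) \<Phi>S(1) Suc GV]
                                            Ck_comp[OF V(1) U'(1) \<Phi>S(2) Suc GV])
  qed
  show ?thesis
    apply (rule exI[of _ U'], rule exI[of _ V], rule exI[of _ G])
    using U' U'U V hom' GS by auto
qed


lemma mc_num:
  assumes reg: "regular_timelike_at f q" and mc: "mean_curvature f q = 0"
  shows "num (pd1 f q) (pd2 f q) (pd1 (pd1 f) q) (pd2 (pd1 f) q) (pd2 (pd2 f) q) = 0"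
proof -
  define a where "a = pd1 f q"
  define b where "b = pd2 f q"
  define \<nu> where "\<nu> = lcross a b"
  define D where "D = lip a a * lip b b - (lip a b)\<^sup>2"
  have D: "D < 0" using reg by (simp add: regular_timelike_at_def D_def fE_def fF_def fG_def a_def b_def)
  have nn: "lip \<nu> \<nu> = - D" unfolding \<nu>_def D_def by (rule lip_lcross_self)
  define c where "c = 1 / sqrt \<bar>lip \<nu> \<nu>\<bar>"
  have c: "c > 0" using D nn by (simp add: c_def)
  have un: "unit_normal f q = c *\<^sub>R \<nu>" by (simp add: unit_normal_def c_def \<nu>_def a_def b_def Let_def)
  have "mean_curvature f q = c * num a b (pd1 (pd1 f) q) (pd2 (pd1 f) q) (pd2 (pd2 f) q) / (2 * D)"
    unfolding mean_curvature_def sL_def sM_def sN_def un fE_def fF_def fG_def num_def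
      a_def[symmetric] b_def[symmetric] \<nu>_def[symmetric] D_def[symmetric] lip_scale2
    by (simp add: lip_comm[of _ \<nu>] algebra_simps)
  then show ?thesis using mc c D by (simp add: a_def b_def)
qed

lemma HD_fst: "HD (\<lambda>x::real\<times>real. fst x) 1 0 x"
  using HD_linear[OF bounded_linear_fst HD_ident] by simp
lemma HD_snd: "HD (\<lambda>x::real\<times>real. snd x) 0 1 x"
  using HD_linear[OF bounded_linear_snd HD_ident] by simp

lemma num_g1: "num (1,a,0) (0,b,1) (0,c,0) (0,d,0) (0,e,0) = (1 - b\<^sup>2) * c + 2 * a * b * d - (1 + a\<^sup>2) * e"
  unfolding num_def lcross_eq lip_def by (simp add: power2_eq_square algebra_simps)
lemma num_g2: "num (a,1,0) (b,0,1) (c,0) (d,0) (e,0) = - ((1 - b\<^sup>2) * c + 2 * a * b * d - (1 + a\<^sup>2) * e)"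
  unfolding num_def lcross_eq lip_def by (simp add: power2_eq_square algebra_simps)

lemma graph_num1:
  assumes W: "open W" and C: "Ck_on (Suc (Suc 0)) W \<psi>" and s: "s \<in> W"
  shows "num (pd1 (\<lambda>x. (fst x, \<psi> x, snd x)) s) (pd2 (\<lambda>x. (fst x, \<psi> x, snd x)) s)
          (pd1 (pd1 (\<lambda>x. (fst x, \<psi> x, snd x))) s) (pd2 (pd1 (\<lambda>x. (fst x, \<psi> x, snd x))) s)
          (pd2 (pd2 (\<lambda>x. (fst x, \<psi> x, snd x))) s)
       = (1 - (pd2 \<psi> s)\<^sup>2) * pd1 (pd1 \<psi>) s + 2 * pd1 \<psi> s * pd2 \<psi> s * pd2 (pd1 \<psi>) s
          - (1 + (pd1 \<psi> s)\<^sup>2) * pd2 (pd2 \<psi>) s"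
proof -
  define \<Gamma> where "\<Gamma> = (\<lambda>x. (fst x, \<psi> x, snd x))"
  have C1: "Ck_on (Suc 0) W \<psi>" using C Ck_mono by blast
  have Cp: "Ck_on (Suc 0) W (pd1 \<psi>)" "Ck_on (Suc 0) W (pd2 \<psi>)" using C by simp_all
  have H: "HD \<Gamma> (1, pd1 \<psi> x, 0) (0, pd2 \<psi> x, 1) x" if "x \<in> W" for x
    unfolding \<Gamma>_def using HD_pair[OF HD_fst HD_pair[OF Ck_diff[OF W C1 that] HD_snd]] .
  have p1: "pd1 \<Gamma> x = (1, pd1 \<psi> x, 0)" "pd2 \<Gamma> x = (0, pd2 \<psi> x, 1)" if "x \<in> W" for x
    using HD_pd[OF H[OF that]] by auto
  have q1: "pd1 (pd1 \<Gamma>) s = pd1 (\<lambda>x. (1::real, pd1 \<psi> x, 0::real)) s"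
           "pd2 (pd1 \<Gamma>) s = pd2 (\<lambda>x. (1::real, pd1 \<psi> x, 0::real)) s"
    using pd_cong[OF W s, of "pd1 \<Gamma>" "\<lambda>x. (1::real, pd1 \<psi> x, 0::real)"] p1(1) by simp_all
  have q2: "pd2 (pd2 \<Gamma>) s = pd2 (\<lambda>x. (0::real, pd2 \<psi> x, 1::real)) s"
    using pd_cong[OF W s, of "pd2 \<Gamma>" "\<lambda>x. (0::real, pd2 \<psi> x, 1::real)"] p1(2) by simp_all
  note K1 = HD_pd[OF HD_pair[OF HD_const HD_pair[OF Ck_diff[OF W Cp(1) s] HD_const]]]
  note K2 = HD_pd[OF HD_pair[OF HD_const HD_pair[OF Ck_diff[OF W Cp(2) s] HD_const]]]
  show ?thesis
    unfolding \<Gamma>_def[symmetric] q1 q2 K1 K2 p1[OF s] by (rule num_g1)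
qed

lemma graph_num2:
  assumes W: "open W" and C: "Ck_on (Suc (Suc 0)) W \<psi>" and s: "s \<in> W"
  shows "num (pd1 (\<lambda>x. (\<psi> x, fst x, snd x)) s) (pd2 (\<lambda>x. (\<psi> x, fst x, snd x)) s)
          (pd1 (pd1 (\<lambda>x. (\<psi> x, fst x, snd x))) s) (pd2 (pd1 (\<lambda>x. (\<psi> x, fst x, snd x))) s)
          (pd2 (pd2 (\<lambda>x. (\<psi> x, fst x, snd x))) s)
       = - ((1 - (pd2 \<psi> s)\<^sup>2) * pd1 (pd1 \<psi>) s + 2 * pd1 \<psi> s * pd2 \<psi> s * pd2 (pd1 \<psi>) s
          - (1 + (pd1 \<psi> s)\<^sup>2) * pd2 (pd2 \<psi>) s)"
proof -
  define \<Gamma> where "\<Gamma> = (\<lambda>x. (\<psi> x, fst x, snd x))"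
  have C1: "Ck_on (Suc 0) W \<psi>" using C Ck_mono by blast
  have Cp: "Ck_on (Suc 0) W (pd1 \<psi>)" "Ck_on (Suc 0) W (pd2 \<psi>)" using C by simp_all
  have H: "HD \<Gamma> (pd1 \<psi> x, 1, 0) (pd2 \<psi> x, 0, 1) x" if "x \<in> W" for x
    unfolding \<Gamma>_def using HD_pair[OF Ck_diff[OF W C1 that] HD_pair[OF HD_fst HD_snd]] .
  have p1: "pd1 \<Gamma> x = (pd1 \<psi> x, 1, 0)" "pd2 \<Gamma> x = (pd2 \<psi> x, 0, 1)" if "x \<in> W" for x
    using HD_pd[OF H[OF that]] by auto
  have q1: "pd1 (pd1 \<Gamma>) s = pd1 (\<lambda>x. (pd1 \<psi> x, 1::real, 0::real)) s"
           "pd2 (pd1 \<Gamma>) s = pd2 (\<lambda>x. (pd1 \<psi> x, 1::real, 0::real)) s"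
    using pd_cong[OF W s, of "pd1 \<Gamma>" "\<lambda>x. (pd1 \<psi> x, 1::real, 0::real)"] p1(1) by simp_all
  have q2: "pd2 (pd2 \<Gamma>) s = pd2 (\<lambda>x. (pd2 \<psi> x, 0::real, 1::real)) s"
    using pd_cong[OF W s, of "pd2 \<Gamma>" "\<lambda>x. (pd2 \<psi> x, 0::real, 1::real)"] p1(2) by simp_all
  note K1 = HD_pd[OF HD_pair[OF Ck_diff[OF W Cp(1) s] HD_const]]
  note K2 = HD_pd[OF HD_pair[OF Ck_diff[OF W Cp(2) s] HD_const]]
  show ?thesis
    unfolding \<Gamma>_def[symmetric] q1 q2 K1 K2 p1[OF s] by (rule num_g2)
qed

lemma graph_generic:
  fixes f :: "real\<times>real \<Rightarrow> real\<times>real\<times>real" and P :: "real\<times>real\<times>real \<Rightarrow> real\<times>real"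
  assumes U: "open U" and fS: "\<forall>k. Ck_on k U f" and reg: "\<forall>q\<in>U. regular_timelike_at f q"
    and mc: "\<forall>q\<in>U. mean_curvature f q = 0" and pU: "p \<in> U" and P: "bounded_linear P"
    and J: "fst (P (pd1 f p)) * snd (P (pd2 f p)) - fst (P (pd2 f p)) * snd (P (pd1 f p)) \<noteq> 0"
  shows "\<exists>V W G. open V \<and> p \<in> V \<and> V \<subseteq> U \<and> open W \<and> (\<forall>q\<in>V. P (f q) \<in> W \<and> G (P (f q)) = q)
           \<and> (\<forall>s\<in>W. G s \<in> V \<and> P (f (G s)) = s) \<and> (\<forall>k. Ck_on k W (\<lambda>s. f (G s)))
           \<and> (\<forall>s\<in>W. num (pd1 (\<lambda>x. f (G x)) s) (pd2 (\<lambda>x. f (G x)) s) (pd1 (pd1 (\<lambda>x. f (G x))) s)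
              (pd2 (pd1 (\<lambda>x. f (G x))) s) (pd2 (pd2 (\<lambda>x. f (G x))) s) = 0)"
proof -
  define h where "h = (\<lambda>s. P (f s))"
  have hS: "\<forall>k. Ck_on k U h"
  proof
    fix k show "Ck_on k U h" unfolding h_def by (rule Ck_linear[OF U P fS[rule_format]])
  qed
  have fd: "f differentiable (at p)" using fS[rule_format, of "Suc 0"] U pU
    by (simp add: differentiable_on_eq_differentiable_at)
  have Jh: "fst (pd1 h p) * snd (pd2 h p) - fst (pd2 h p) * snd (pd1 h p) \<noteq> 0"
    using J pd_lin[OF P fd] by (simp add: h_def)
  from local_inverse[OF U hS pU Jh] obtain V W G where VW: "open V" "p \<in> V" "V \<subseteq> U" "open W" "\<forall>q\<in>V. h q \<in> W \<and> G (h q) = q"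
    "\<forall>s\<in>W. G s \<in> V \<and> h (G s) = s" and GS: "\<forall>k. Ck_on k W G"
    by (elim exE conjE)
  have GW: "G ` W \<subseteq> V" using VW by blast
  have fV: "Ck_on k V f" for k by (rule Ck_subset[OF VW(1) VW(3) fS[rule_format]])
  have FS: "\<forall>k. Ck_on k W (\<lambda>s. f (G s))"
  proof
    fix k show "Ck_on k W (\<lambda>s. f (G s))" by (rule Ck_comp[OF VW(4) VW(1) fV GS[rule_format] GW])
  qed
  have nz: "num (pd1 (\<lambda>x. f (G x)) s) (pd2 (\<lambda>x. f (G x)) s) (pd1 (pd1 (\<lambda>x. f (G x))) s)
              (pd2 (pd1 (\<lambda>x. f (G x))) s) (pd2 (pd2 (\<lambda>x. f (G x))) s) = 0" if s: "s \<in> W" for s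
  proof -
    have GsU: "G s \<in> U" using GW VW(3) s by blast
    show ?thesis
      unfolding core[OF VW(1) VW(4) fV GS[rule_format] GW s]
      using mc_num[of f "G s"] reg mc GsU by simp
  qed
  have VW5: "\<forall>q\<in>V. P (f q) \<in> W \<and> G (P (f q)) = q" using VW(5) by (simp add: h_def)
  have VW6: "\<forall>s\<in>W. G s \<in> V \<and> P (f (G s)) = s" using VW(6) by (simp add: h_def)
  show ?thesis
    by (intro exI[of _ V] exI[of _ W] exI[of _ G] conjI VW(1-4) VW5 VW6 FS ballI nz)
qed


lemma num_transfer:
  assumes W: "open W" and s: "s \<in> W" and eq: "\<And>x. x \<in> W \<Longrightarrow> F x = \<Gamma> x"
  shows "num (pd1 F s) (pd2 F s) (pd1 (pd1 F) s) (pd2 (pd1 F) s) (pd2 (pd2 F) s)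
       = num (pd1 \<Gamma> s) (pd2 \<Gamma> s) (pd1 (pd1 \<Gamma>) s) (pd2 (pd1 \<Gamma>) s) (pd2 (pd2 \<Gamma>) s)"
proof -
  have e1: "pd1 F x = pd1 \<Gamma> x" "pd2 F x = pd2 \<Gamma> x" if "x \<in> W" for x
    using pd_cong[OF W that, of F \<Gamma>] eq by blast+
  have e2: "pd1 (pd1 F) s = pd1 (pd1 \<Gamma>) s" "pd2 (pd1 F) s = pd2 (pd1 \<Gamma>) s"
    using pd_cong[OF W s, of "pd1 F" "pd1 \<Gamma>"] e1(1) by blast+
  have e3: "pd2 (pd2 F) s = pd2 (pd2 \<Gamma>) s"
    using pd_cong(2)[OF W s, of "pd2 F" "pd2 \<Gamma>"] e1(2) by blast
  show ?thesis using e1[OF s] e2 e3 by simp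
qed

theorem theorem2p1:
  fixes f :: "real \<times> real \<Rightarrow> real \<times> real \<times> real" and U :: "(real \<times> real) set"
  assumes "open U"
    and "smooth_on U f"
    and "\<forall>p\<in>U. regular_timelike_at f p"
    and "\<forall>p\<in>U. mean_curvature f p = 0"
    and "p \<in> U"
  shows "\<exists>V W (\<psi> :: real \<times> real \<Rightarrow> real).
           open V \<and> p \<in> V \<and> V \<subseteq> U \<and> open W \<and> smooth_on W \<psi> \<and> born_infeld W \<psi> \<and>
           (f ` V = {(x, \<psi> (x, z), z) | x z. (x, z) \<in> W}
            \<or> f ` V = {(\<psi> (y, z), y, z) | y z. (y, z) \<in> W})"
proof -
  note U = assms(1) and reg = assms(3) and mc = assms(4) and pU = assms(5)
  have fS: "\<forall>k. Ck_on k U f" using assms(2) by (simp add: smooth_on_def)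
  define a where "a = pd1 f p"
  define b where "b = pd2 f p"
  define \<nu> where "\<nu> = lcross a b"
  have D: "lip a a * lip b b - (lip a b)\<^sup>2 < 0"
    using reg pU by (simp add: regular_timelike_at_def fE_def fF_def fG_def a_def b_def)
  have nn: "lip \<nu> \<nu> > 0" using D lip_lcross_self[of a b] by (simp add: \<nu>_def)
  have "fst \<nu> \<noteq> 0 \<or> fst (snd \<nu>) \<noteq> 0"
  proof (rule ccontr)
    assume "\<not> (fst \<nu> \<noteq> 0 \<or> fst (snd \<nu>) \<noteq> 0)"
    then have "lip \<nu> \<nu> = - (snd (snd \<nu>))\<^sup>2" by (simp add: lip_def power2_eq_square)
    then show False using nn by (smt (verit) zero_le_power2)
  qed
  then show ?thesis
  proof
    assume n1: "fst \<nu> \<noteq> 0"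
    define P where "P = (\<lambda>v::real\<times>real\<times>real. (fst (snd v), snd (snd v)))"
    have lP: "bounded_linear P" unfolding P_def
      using bounded_linear_Pair[OF bounded_linear_compose[OF bounded_linear_fst bounded_linear_snd]
                               bounded_linear_compose[OF bounded_linear_snd bounded_linear_snd]]
      by (simp add: o_def)
    have J: "fst (P (pd1 f p)) * snd (P (pd2 f p)) - fst (P (pd2 f p)) * snd (P (pd1 f p)) \<noteq> 0"
      using n1 by (simp add: P_def \<nu>_def lcross_eq a_def b_def algebra_simps)
    obtain V W G where VW: "open V" "p \<in> V" "V \<subseteq> U" "open W"
      and VW5: "\<forall>q\<in>V. P (f q) \<in> W \<and> G (P (f q)) = q"
      and VW6: "\<forall>s\<in>W. G s \<in> V \<and> P (f (G s)) = s" and FS: "\<forall>k. Ck_on k W (\<lambda>s. f (G s))"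
      and nz: "\<forall>s\<in>W. num (pd1 (\<lambda>x. f (G x)) s) (pd2 (\<lambda>x. f (G x)) s) (pd1 (pd1 (\<lambda>x. f (G x))) s)
              (pd2 (pd1 (\<lambda>x. f (G x))) s) (pd2 (pd2 (\<lambda>x. f (G x))) s) = 0"
      using graph_generic[OF U fS reg mc pU lP J] by (elim exE conjE)
    define \<psi> where "\<psi> = (\<lambda>s. fst (f (G s)))"
    have \<psi>S: "Ck_on k W \<psi>" for k
      unfolding \<psi>_def by (rule Ck_linear[OF VW(4) bounded_linear_fst FS[rule_format]])
    have \<Gamma>: "f (G s) = (\<psi> s, fst s, snd s)" if "s \<in> W" for s
      using VW6 that by (auto simp: \<psi>_def P_def prod_eq_iff)
    have bi: "born_infeld W \<psi>"
      unfolding born_infeld_def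
    proof
      fix s assume s: "s \<in> W"
      have "num (pd1 (\<lambda>x. f (G x)) s) (pd2 (\<lambda>x. f (G x)) s) (pd1 (pd1 (\<lambda>x. f (G x))) s)
              (pd2 (pd1 (\<lambda>x. f (G x))) s) (pd2 (pd2 (\<lambda>x. f (G x))) s)
          = num (pd1 (\<lambda>x. (\<psi> x, fst x, snd x)) s) (pd2 (\<lambda>x. (\<psi> x, fst x, snd x)) s)
          (pd1 (pd1 (\<lambda>x. (\<psi> x, fst x, snd x))) s) (pd2 (pd1 (\<lambda>x. (\<psi> x, fst x, snd x))) s)
          (pd2 (pd2 (\<lambda>x. (\<psi> x, fst x, snd x))) s)"
        by (rule num_transfer[OF VW(4) s \<Gamma>])
      then show "(1 - (pd2 \<psi> s)\<^sup>2) * pd1 (pd1 \<psi>) s + 2 * pd1 \<psi> s * pd2 \<psi> s * pd2 (pd1 \<psi>) s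
          - (1 + (pd1 \<psi> s)\<^sup>2) * pd2 (pd2 \<psi>) s = 0"
        unfolding graph_num2[OF VW(4) \<psi>S s] using nz s by simp
    qed
    have img: "f ` V = {(\<psi> (y, z), y, z) | y z. (y, z) \<in> W}"
    proof (intro equalityI subsetI)
      fix w assume "w \<in> f ` V"
      then obtain q where q: "q \<in> V" "w = f q" by blast
      define s where "s = P (f q)"
      have s: "s \<in> W" "G s = q" using VW5 q(1) by (auto simp: s_def)
      have "w = (\<psi> (fst s, snd s), fst s, snd s)" using \<Gamma>[OF s(1)] s q by simp
      then show "w \<in> {(\<psi> (y, z), y, z) | y z. (y, z) \<in> W}" using s(1) by (cases s) auto
    next
      fix w assume "w \<in> {(\<psi> (y, z), y, z) | y z. (y, z) \<in> W}"
      then obtain y z where w: "w = (\<psi> (y, z), y, z)" "(y, z) \<in> W" by blast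
      have "w = f (G (y, z))" using \<Gamma>[OF w(2)] w(1) by simp
      moreover have "G (y, z) \<in> V" using VW6 w(2) by blast
      ultimately show "w \<in> f ` V" by blast
    qed
    show ?thesis
      using VW \<psi>S bi img by (auto simp: smooth_on_def)
  next
    assume n2: "fst (snd \<nu>) \<noteq> 0"
    define P where "P = (\<lambda>v::real\<times>real\<times>real. (fst v, snd (snd v)))"
    have lP: "bounded_linear P" unfolding P_def
      using bounded_linear_Pair[OF bounded_linear_fst
                               bounded_linear_compose[OF bounded_linear_snd bounded_linear_snd]]
      by (simp add: o_def)
    have J: "fst (P (pd1 f p)) * snd (P (pd2 f p)) - fst (P (pd2 f p)) * snd (P (pd1 f p)) \<noteq> 0"
      using n2 by (simp add: P_def \<nu>_def lcross_eq a_def b_def algebra_simps)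
    obtain V W G where VW: "open V" "p \<in> V" "V \<subseteq> U" "open W"
      and VW5: "\<forall>q\<in>V. P (f q) \<in> W \<and> G (P (f q)) = q"
      and VW6: "\<forall>s\<in>W. G s \<in> V \<and> P (f (G s)) = s" and FS: "\<forall>k. Ck_on k W (\<lambda>s. f (G s))"
      and nz: "\<forall>s\<in>W. num (pd1 (\<lambda>x. f (G x)) s) (pd2 (\<lambda>x. f (G x)) s) (pd1 (pd1 (\<lambda>x. f (G x))) s)
              (pd2 (pd1 (\<lambda>x. f (G x))) s) (pd2 (pd2 (\<lambda>x. f (G x))) s) = 0"
      using graph_generic[OF U fS reg mc pU lP J] by (elim exE conjE)
    define \<psi> where "\<psi> = (\<lambda>s. fst (snd (f (G s))))"
    have lfs: "bounded_linear (\<lambda>v::real\<times>real\<times>real. fst (snd v))"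
      using bounded_linear_compose[OF bounded_linear_fst bounded_linear_snd] by (simp add: o_def)
    have \<psi>S: "Ck_on k W \<psi>" for k
      unfolding \<psi>_def by (rule Ck_linear[OF VW(4) lfs FS[rule_format]])
    have \<Gamma>: "f (G s) = (fst s, \<psi> s, snd s)" if "s \<in> W" for s
      using VW6 that by (auto simp: \<psi>_def P_def prod_eq_iff)
    have bi: "born_infeld W \<psi>"
      unfolding born_infeld_def
    proof
      fix s assume s: "s \<in> W"
      have "num (pd1 (\<lambda>x. f (G x)) s) (pd2 (\<lambda>x. f (G x)) s) (pd1 (pd1 (\<lambda>x. f (G x))) s)
              (pd2 (pd1 (\<lambda>x. f (G x))) s) (pd2 (pd2 (\<lambda>x. f (G x))) s)
          = num (pd1 (\<lambda>x. (fst x, \<psi> x, snd x)) s) (pd2 (\<lambda>x. (fst x, \<psi> x, snd x)) s)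
          (pd1 (pd1 (\<lambda>x. (fst x, \<psi> x, snd x))) s) (pd2 (pd1 (\<lambda>x. (fst x, \<psi> x, snd x))) s)
          (pd2 (pd2 (\<lambda>x. (fst x, \<psi> x, snd x))) s)"
        by (rule num_transfer[OF VW(4) s \<Gamma>])
      then show "(1 - (pd2 \<psi> s)\<^sup>2) * pd1 (pd1 \<psi>) s + 2 * pd1 \<psi> s * pd2 \<psi> s * pd2 (pd1 \<psi>) s
          - (1 + (pd1 \<psi> s)\<^sup>2) * pd2 (pd2 \<psi>) s = 0"
        unfolding graph_num1[OF VW(4) \<psi>S s] using nz s by simp
    qed
    have img: "f ` V = {(x, \<psi> (x, z), z) | x z. (x, z) \<in> W}"
    proof (intro equalityI subsetI)
      fix w assume "w \<in> f ` V"
      then obtain q where q: "q \<in> V" "w = f q" by blast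
      define s where "s = P (f q)"
      have s: "s \<in> W" "G s = q" using VW5 q(1) by (auto simp: s_def)
      have "w = (fst s, \<psi> (fst s, snd s), snd s)" using \<Gamma>[OF s(1)] s q by simp
      then show "w \<in> {(x, \<psi> (x, z), z) | x z. (x, z) \<in> W}" using s(1) by auto
    next
      fix w assume "w \<in> {(x, \<psi> (x, z), z) | x z. (x, z) \<in> W}"
      then obtain x z where w: "w = (x, \<psi> (x, z), z)" "(x, z) \<in> W" by blast
      have "w = f (G (x, z))" using \<Gamma>[OF w(2)] w(1) by simp
      moreover have "G (x, z) \<in> V" using VW6 w(2) by blast
      ultimately show "w \<in> f ` V" by blast
    qed
    show ?thesis
      using VW \<psi>S bi img by (auto simp: smooth_on_def)
  qed
qed


end
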